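(* For every $k\ge1$, the square $$\begin{array}{ccc}H^1(C/\mathcal I^kC)&\xrightarrow{\psi^{(k)}}&H^2(\mathcal I^kC/\mathcal I^{k+1}C)\\ \downarrow\pi&&\downarrow\rho\\ E_k^{0,1}&\xrightarrow{\beta^{(k)}}&E_k^{k,2-k}\end{array}$$ commutes, i.e. $\rho\circ\psi^{(k)}=\beta^{(k)}\circ\pi$, where $\pi$ and $\rho$ are surjective.
   Context: Let $\mathcal R$ be a (possibly non-commutative) ring, $\mathcal I\subset\mathcal R$ a two-sided ideal, and $C=[C^1\xrightarrow{d}C^2]$ a complex of left $\mathcal R$-modules concentrated in degrees 1 and 2. The filtration $\{\mathcal I^iC\}_{i\ge0}$ gives a spectral sequence with $Z_k^{i,j}=\ker(\mathcal I^iC^{i+j}\xrightarrow{d}C^{i+j+1}/\mathcal I^{i+k}C^{i+j+1})$, $B_k^{i,j}=\mathcal I^iC^{i+j}\cap d(\mathcal I^{i-k}C^{i+j-1})$ (with $\mathcal I^m=\mathcal R$ for $m\le0$), $E_k^{i,j}=Z_k^{i,j}/(Z_{k-1}^{i+1,j-1}+B_{k-1}^{i,j})$, and differentials $d_k^{i,j}:E_k^{i,j}\to E_k^{i+k,j+1-k}$ induced by $d$; $E_1^{i,j}=H^{i+j}(\mathcal I^iC/\mathcal I^{i+1}C)$. The $k$-th derived Bockstein map is $\beta^{(k)}=d_k^{0,1}$. The $k$-th generalized Bockstein map $\psi^{(k)}$ is the connecting homomorphism $H^1(C/\mathcal I^kC)\to H^2(\mathcal I^kC/\mathcal I^{k+1}C)$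 of $0\to\mathcal I^kC/\mathcal I^{k+1}C\to C/\mathcal I^{k+1}C\to C/\mathcal I^kC\to0$. Here $E_k^{0,1}=\{a\in C^1:da\in\mathcal I^kC^2\}/\{a\in\mathcal IC^1:da\in\mathcal I^kC^2\}$, and $\pi:H^1(C/\mathcal I^kC)\to E_k^{0,1}$ sends the class of $a\bmod\mathcal I^kC^1$ (with $da\in\mathcal I^kC^2$) to the class of $a$; $\rho$ is the natural surjection $E_1^{k,2-k}\to E_k^{k,2-k}$ (note $d_j^{k,2-k}=0$ as $C^3=0$). *)

theory Defs
  imports "HOL-Algebra.Module" "HOL-Algebra.Ideal_Product" "HOL-Algebra.AbelCoset"
begin

text \<open>Same axioms as HOL-Algebra's module locale, but over an arbitrary ring.\<close>
locale left_module = R?: ring R + M?: abelian_group M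
  for R (structure) and M (structure) +
  assumes lm_smult_closed:
      "\<lbrakk>a \<in> carrier R; x \<in> carrier M\<rbrakk> \<Longrightarrow> a \<odot>\<^bsub>M\<^esub> x \<in> carrier M"
    and lm_smult_l_distr:
      "\<lbrakk>a \<in> carrier R; b \<in> carrier R; x \<in> carrier M\<rbrakk> \<Longrightarrow>
      (a \<oplus> b) \<odot>\<^bsub>M\<^esub> x = a \<odot>\<^bsub>M\<^esub> x \<oplus>\<^bsub>M\<^esub> b \<odot>\<^bsub>M\<^esub> x"
    and lm_smult_r_distr:
      "\<lbrakk>a \<in> carrier R; x \<in> carrier M; y \<in> carrier M\<rbrakk> \<Longrightarrow>
      a \<odot>\<^bsub>M\<^esub> (x \<oplus>\<^bsub>M\<^esub> y) = a \<odot>\<^bsub>M\<^esub> x \<oplus>\<^bsub>M\<^esub> a \<odot>\<^bsub>M\<^esub> y"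
    and lm_smult_assoc1:
      "\<lbrakk>a \<in> carrier R; b \<in> carrier R; x \<in> carrier M\<rbrakk> \<Longrightarrow>
      (a \<otimes> b) \<odot>\<^bsub>M\<^esub> x = a \<odot>\<^bsub>M\<^esub> (b \<odot>\<^bsub>M\<^esub> x)"
    and lm_smult_one:
      "x \<in> carrier M \<Longrightarrow> \<one> \<odot>\<^bsub>M\<^esub> x = x"

definition left_module_hom ::
  "('r, 'x) ring_scheme \<Rightarrow> ('r, 'b, 'c) module_scheme \<Rightarrow> ('r, 'b2, 'c2) module_scheme \<Rightarrow> ('b \<Rightarrow> 'b2) \<Rightarrow> bool"
  where "left_module_hom R M N f \<longleftrightarrow>
    f \<in> carrier M \<rightarrow> carrier N \<and>
    (\<forall>x\<in>carrier M. \<forall>y\<in>carrier M. f (x \<oplus>\<^bsub>M\<^esub> y) = f x \<oplus>\<^bsub>N\<^esub> f y) \<and>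
    (\<forall>a\<in>carrier R. \<forall>x\<in>carrier M. f (a \<odot>\<^bsub>M\<^esub> x) = a \<odot>\<^bsub>N\<^esub> f x)"

definition left_submodule ::
  "('r, 'x) ring_scheme \<Rightarrow> ('r, 'b, 'c) module_scheme \<Rightarrow> 'b set \<Rightarrow> bool"
  where "left_submodule R M N \<longleftrightarrow>
    N \<subseteq> carrier M \<and> \<zero>\<^bsub>M\<^esub> \<in> N \<and>
    (\<forall>x\<in>N. \<forall>y\<in>N. x \<oplus>\<^bsub>M\<^esub> y \<in> N) \<and> (\<forall>x\<in>N. \<ominus>\<^bsub>M\<^esub> x \<in> N) \<and>
    (\<forall>a\<in>carrier R. \<forall>x\<in>N. a \<odot>\<^bsub>M\<^esub> x \<in> N)"

definition ideal_times_module ::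
  "('r, 'x) ring_scheme \<Rightarrow> 'r set \<Rightarrow> ('r, 'b, 'c) module_scheme \<Rightarrow> 'b set"
  where "ideal_times_module R J M =
    \<Inter>{N. left_submodule R M N \<and> {a \<odot>\<^bsub>M\<^esub> x | a x. a \<in> J \<and> x \<in> carrier M} \<subseteq> N}"

primrec ideal_pow :: "('r, 'x) ring_scheme \<Rightarrow> 'r set \<Rightarrow> nat \<Rightarrow> 'r set" where
  "ideal_pow R I 0 = carrier R"
| "ideal_pow R I (Suc n) = ideal_prod R I (ideal_pow R I n)"

definition ideal_ipow :: "('r, 'x) ring_scheme \<Rightarrow> 'r set \<Rightarrow> int \<Rightarrow> 'r set" where
  "ideal_ipow R I m = (if m \<le> 0 then carrier R else ideal_pow R I (nat m))"

text \<open>A cochain complex is a family \<open>C :: int \<Rightarrow> module\<close> with differentials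
  \<open>d n : C n \<rightarrow> C (n+1)\<close>.\<close>
definition filt where
  "filt R I C i n = ideal_times_module R (ideal_ipow R I i) (C n)"

definition qcls where "qcls M N a = N +>\<^bsub>M\<^esub> a"
definition quot where "quot M A N = qcls M N ` A"
definition induced where "induced M N f X = qcls M N (f (SOME x. x \<in> X))"

text \<open>Cohomology \<open>H^n(A/B)\<close> of a quotient complex \<open>A/B\<close> (\<open>B \<subseteq> A \<subseteq> C\<close> subcomplexes,
  given degreewise as subsets): cycles \<open>{a \<in> A^n. d a \<in> B^(n+1)}\<close> modulo
  boundaries \<open>B^n + d(A^(n-1))\<close>.\<close>
definition Hcyc where "Hcyc d A B n = {a \<in> A n. d n a \<in> B (n + 1)}"
definition Hbd where "Hbd C d A B n = B n <+>\<^bsub>C n\<^esub> (d (n - 1) ` A (n - 1))"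
definition Hq where "Hq C d A B n = quot (C n) (Hcyc d A B n) (Hbd C d A B n)"

text \<open>Connecting homomorphism \<open>H^n(A/B) \<rightarrow> H^(n+1)(B/D)\<close> of
  \<open>0 \<rightarrow> B/D \<rightarrow> A/D \<rightarrow> A/B \<rightarrow> 0\<close> (\<open>D \<subseteq> B \<subseteq> A\<close>): lift a cycle representative
  \<open>a\<close> to \<open>A/D\<close> (by \<open>a\<close> itself), apply \<open>d\<close>, and take the class of \<open>d a \<in> B^(n+1)\<close>.\<close>
definition connecting where
  "connecting C d B D n = induced (C (n + 1)) (Hbd C d B D (n + 1)) (d n)"

definition ssZ where
  "ssZ R I C d k i j =
     {a \<in> filt R I C i (i + j). d (i + j) a \<in> filt R I C (i + k) (i + j + 1)}"
definition ssB where
  "ssB R I C d k i j =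
     filt R I C i (i + j) \<inter> d (i + j - 1) ` filt R I C (i - k) (i + j - 1)"
definition ssEden where
  "ssEden R I C d k i j =
     ssZ R I C d (k - 1) (i + 1) (j - 1) <+>\<^bsub>C (i + j)\<^esub> ssB R I C d (k - 1) i j"
definition ssE where
  "ssE R I C d k i j = quot (C (i + j)) (ssZ R I C d k i j) (ssEden R I C d k i j)"
definition ssd where
  "ssd R I C d k i j = induced (C (i + j + 1)) (ssEden R I C d k (i + k) (j + 1 - k)) (d (i + j))"

end

theory Submission
  imports Defs
begin

lemma lsub_carrier:
  assumes "left_module R M" shows "left_submodule R M (carrier M)"
proof -
  interpret left_module R M by fact
  show ?thesis unfolding left_submodule_def by (auto intro: lm_smult_closed)
qed

lemma lsub_Inter:
  assumes "S \<noteq> {}" "\<forall>N\<in>S. left_submodule R M N"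
  shows "left_submodule R M (\<Inter>S)"
proof -
  obtain N0 where N0: "N0 \<in> S" using assms(1) by blast
  have L: "\<And>N. N \<in> S \<Longrightarrow> N \<subseteq> carrier M \<and> \<zero>\<^bsub>M\<^esub> \<in> N \<and>
    (\<forall>x\<in>N. \<forall>y\<in>N. x \<oplus>\<^bsub>M\<^esub> y \<in> N) \<and> (\<forall>x\<in>N. \<ominus>\<^bsub>M\<^esub> x \<in> N) \<and>
    (\<forall>a\<in>carrier R. \<forall>x\<in>N. a \<odot>\<^bsub>M\<^esub> x \<in> N)"
    using assms(2) unfolding left_submodule_def by simp
  show ?thesis unfolding left_submodule_def
  proof (intro conjI ballI)
    show "\<Inter>S \<subseteq> carrier M" using Inter_lower[OF N0] conjunct1[OF L[OF N0]] by (rule order_trans)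
    show "\<zero>\<^bsub>M\<^esub> \<in> \<Inter>S" using L by (intro InterI) simp
    fix x assume x: "x \<in> \<Inter>S"
    show "\<ominus>\<^bsub>M\<^esub> x \<in> \<Inter>S" proof (rule InterI)
      fix N assume "N \<in> S" then show "\<ominus>\<^bsub>M\<^esub> x \<in> N" using L[of N] x by simp
    qed
    fix y assume y: "y \<in> \<Inter>S"
    show "x \<oplus>\<^bsub>M\<^esub> y \<in> \<Inter>S" proof (rule InterI)
      fix N assume "N \<in> S" then show "x \<oplus>\<^bsub>M\<^esub> y \<in> N" using L[of N] x y by simp
    qed
  next
    fix a x assume a: "a \<in> carrier R" and x: "x \<in> \<Inter>S"
    show "a \<odot>\<^bsub>M\<^esub> x \<in> \<Inter>S" proof (rule InterI)
      fix N assume "N \<in> S" then show "a \<odot>\<^bsub>M\<^esub> x \<in> N" using L[of N] x a by simp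
    qed
  qed
qed

lemma itm_gens_sub:
  assumes "left_module R M" "J \<subseteq> carrier R"
  shows "{a \<odot>\<^bsub>M\<^esub> x | a x. a \<in> J \<and> x \<in> carrier M} \<subseteq> carrier M"
proof -
  interpret left_module R M by fact
  show ?thesis using assms(2) by (auto intro: lm_smult_closed)
qed

lemma itm_sub:
  assumes "left_module R M" "J \<subseteq> carrier R"
  shows "left_submodule R M (ideal_times_module R J M)"
  unfolding ideal_times_module_def
  apply (rule lsub_Inter)
  using lsub_carrier[OF assms(1)] itm_gens_sub[OF assms] by auto

lemma itm_least:
  assumes "left_submodule R M N" "{a \<odot>\<^bsub>M\<^esub> x | a x. a \<in> J \<and> x \<in> carrier M} \<subseteq> N"
  shows "ideal_times_module R J M \<subseteq> N"
  unfolding ideal_times_module_def using assms by blast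

lemma itm_gen:
  assumes "a \<in> J" "x \<in> carrier M"
  shows "a \<odot>\<^bsub>M\<^esub> x \<in> ideal_times_module R J M"
  unfolding ideal_times_module_def using assms by blast

lemma lsub_subgroup:
  assumes "left_submodule R M N" shows "additive_subgroup N M"
  using assms unfolding left_submodule_def
  by (auto simp: a_inv_def intro!: subgroup.intro additive_subgroup.intro)

lemma lmh_agh:
  assumes "left_module R M" "left_module R N" "left_module_hom R M N f"
  shows "abelian_group_hom M N f"
proof -
  interpret M: left_module R M by fact
  interpret N: left_module R N by fact
  show ?thesis
    apply (intro abelian_group_hom.intro abelian_group_hom_axioms.intro group_hom.intro group_hom_axioms.intro)
    using M.abelian_group_axioms N.abelian_group_axioms M.a_group N.a_group assms(3)
    by (auto simp: hom_def left_module_hom_def)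
qed

lemma lmh_zero:
  assumes "left_module R M" "left_module R N" "left_module_hom R M N f"
  shows "f \<zero>\<^bsub>M\<^esub> = \<zero>\<^bsub>N\<^esub>"
  using abelian_group_hom.hom_zero[OF lmh_agh[OF assms]] .

lemma lmh_inv:
  assumes "left_module R M" "left_module R N" "left_module_hom R M N f" "x \<in> carrier M"
  shows "f (\<ominus>\<^bsub>M\<^esub> x) = \<ominus>\<^bsub>N\<^esub> f x"
  using abelian_group_hom.hom_a_inv[OF lmh_agh[OF assms(1-3)]] assms(4) by blast

lemma lmh_closed:
  assumes "left_module_hom R M N f" "x \<in> carrier M"
  shows "f x \<in> carrier N"
  using assms unfolding left_module_hom_def by blast

lemma lmh_add:
  assumes "left_module_hom R M N f" "x \<in> carrier M" "y \<in> carrier M"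
  shows "f (x \<oplus>\<^bsub>M\<^esub> y) = f x \<oplus>\<^bsub>N\<^esub> f y"
  using assms unfolding left_module_hom_def by blast

lemma lmh_smult:
  assumes "left_module_hom R M N f" "a \<in> carrier R" "x \<in> carrier M"
  shows "f (a \<odot>\<^bsub>M\<^esub> x) = a \<odot>\<^bsub>N\<^esub> f x"
  using assms unfolding left_module_hom_def by blast

lemma lsub_preimage:
  assumes "left_module R M" "left_module R N" "left_module_hom R M N f" "left_submodule R N S"
  shows "left_submodule R M {x \<in> carrier M. f x \<in> S}"
proof -
  interpret M: left_module R M by fact
  interpret N: left_module R N by fact
  show ?thesis
    using assms(4) unfolding left_submodule_def
    by (auto simp: lmh_zero[OF assms(1-3)] lmh_inv[OF assms(1-3)] lmh_add[OF assms(3)]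
        lmh_smult[OF assms(3)] lmh_closed[OF assms(3)] intro: M.lm_smult_closed)
qed

lemma lsub_image:
  assumes "left_module R M" "left_module R N" "left_module_hom R M N f" "left_submodule R M S"
  shows "left_submodule R N (f ` S)"
proof -
  interpret M: left_module R M by fact
  interpret N: left_module R N by fact
  have sub: "S \<subseteq> carrier M" using assms(4) unfolding left_submodule_def by blast
  show ?thesis
    unfolding left_submodule_def
  proof (intro conjI ballI)
    show "f ` S \<subseteq> carrier N" using sub lmh_closed[OF assms(3)] by blast
    have "\<zero>\<^bsub>M\<^esub> \<in> S" using assms(4) unfolding left_submodule_def by blast
    then show "\<zero>\<^bsub>N\<^esub> \<in> f ` S" using lmh_zero[OF assms(1-3)] by (metis image_eqI)
    fix x y assume "x \<in> f ` S" "y \<in> f ` S"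
    then obtain u v where "u \<in> S" "v \<in> S" "x = f u" "y = f v" by blast
    moreover have "u \<oplus>\<^bsub>M\<^esub> v \<in> S" using assms(4) \<open>u \<in> S\<close> \<open>v \<in> S\<close> unfolding left_submodule_def by blast
    ultimately show "x \<oplus>\<^bsub>N\<^esub> y \<in> f ` S" using sub lmh_add[OF assms(3), of u v]
      by (metis image_eqI subsetD)
  next
    fix x assume "x \<in> f ` S"
    then obtain u where "u \<in> S" "x = f u" by blast
    moreover have "\<ominus>\<^bsub>M\<^esub> u \<in> S" using assms(4) \<open>u \<in> S\<close> unfolding left_submodule_def by blast
    ultimately show "\<ominus>\<^bsub>N\<^esub> x \<in> f ` S" using sub lmh_inv[OF assms(1-3), of u]
      by (metis image_eqI subsetD)
  next
    fix a x assume "a \<in> carrier R" "x \<in> f ` S"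
    then obtain u where "u \<in> S" "x = f u" by blast
    moreover have "a \<odot>\<^bsub>M\<^esub> u \<in> S" using assms(4) \<open>u \<in> S\<close> \<open>a \<in> carrier R\<close> unfolding left_submodule_def by blast
    ultimately show "a \<odot>\<^bsub>N\<^esub> x \<in> f ` S" using sub lmh_smult[OF assms(3) \<open>a \<in> carrier R\<close>, of u]
      by (metis image_eqI subsetD)
  qed
qed

lemma lsub_Int:
  assumes "left_submodule R M A" "left_submodule R M B"
  shows "left_submodule R M (A \<inter> B)"
  using assms unfolding left_submodule_def by blast

lemma itm_hom:
  assumes "left_module R M" "left_module R N" "left_module_hom R M N f" "J \<subseteq> carrier R"
  shows "f ` ideal_times_module R J M \<subseteq> ideal_times_module R J N"
proof -
  have "ideal_times_module R J M \<subseteq> {x \<in> carrier M. f x \<in> ideal_times_module R J N}"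
  proof (rule itm_least)
    show "left_submodule R M {x \<in> carrier M. f x \<in> ideal_times_module R J N}"
      by (rule lsub_preimage[OF assms(1-3) itm_sub[OF assms(2,4)]])
    show "{a \<odot>\<^bsub>M\<^esub> x |a x. a \<in> J \<and> x \<in> carrier M}
        \<subseteq> {x \<in> carrier M. f x \<in> ideal_times_module R J N}"
    proof (rule subsetI)
      fix y assume "y \<in> {a \<odot>\<^bsub>M\<^esub> x |a x. a \<in> J \<and> x \<in> carrier M}"
      then obtain a x where y: "y = a \<odot>\<^bsub>M\<^esub> x" and a: "a \<in> J" and x: "x \<in> carrier M" by blast
      have yc: "y \<in> carrier M" using itm_gens_sub[OF assms(1,4)] y a x by blast
      have "f y = a \<odot>\<^bsub>N\<^esub> f x" using y lmh_smult[OF assms(3) _ x] a assms(4) by blast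
      also have "\<dots> \<in> ideal_times_module R J N" by (rule itm_gen[OF a lmh_closed[OF assms(3) x]])
      finally show "y \<in> {x \<in> carrier M. f x \<in> ideal_times_module R J N}" using yc by simp
    qed
  qed
  then show ?thesis by blast
qed

lemma itm_carrier:
  assumes "left_module R M"
  shows "ideal_times_module R (carrier R) M = carrier M"
proof
  show "ideal_times_module R (carrier R) M \<subseteq> carrier M"
    using itm_sub[OF assms] unfolding left_submodule_def by blast
  interpret left_module R M by fact
  show "carrier M \<subseteq> ideal_times_module R (carrier R) M"
    using itm_gen[of "\<one>\<^bsub>R\<^esub>" "carrier R" _ M R] lm_smult_one by (metis R.one_closed subsetI)
qed

lemma itm_mono:
  assumes "left_module R M" "J \<subseteq> J'" "J' \<subseteq> carrier R"
  shows "ideal_times_module R J M \<subseteq> ideal_times_module R J' M"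
  apply (rule itm_least[OF itm_sub[OF assms(1,3)]])
  using itm_gen[of _ J' _ M R] assms(2) by blast

lemma ideal_pow_ideal:
  assumes "ring R" "ideal I R" shows "ideal (ideal_pow R I n) R"
  by (induct n) (simp_all add: ring.oneideal[OF assms(1)] ring.ideal_prod_is_ideal[OF assms(1,2)])

lemma ideal_pow_mono:
  assumes "ring R" "ideal I R" "m \<le> n" shows "ideal_pow R I n \<subseteq> ideal_pow R I m"
  using assms(3)
proof (induct n rule: dec_induct)
  case base then show ?case by simp
next
  case (step n)
  have "ideal_pow R I (Suc n) \<subseteq> ideal_pow R I n"
    using ring.ideal_prod_inter[OF assms(1,2) ideal_pow_ideal[OF assms(1,2)]] by auto
  then show ?case using step by blast
qed

lemma ideal_ipow_carrier:
  assumes "ring R" "ideal I R" shows "ideal_ipow R I i \<subseteq> carrier R"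
  unfolding ideal_ipow_def using ideal.Icarr[OF ideal_pow_ideal[OF assms]] by auto

lemma ideal_ipow_mono:
  assumes "ring R" "ideal I R" "i \<le> i'" shows "ideal_ipow R I i' \<subseteq> ideal_ipow R I i"
  using assms(3) ideal_ipow_carrier[OF assms(1,2)] ideal_pow_mono[OF assms(1,2), of "nat i" "nat i'"]
  unfolding ideal_ipow_def by auto


lemma set_add_mem:
  "x \<in> H \<Longrightarrow> y \<in> K \<Longrightarrow> x \<oplus>\<^bsub>M\<^esub> y \<in> H <+>\<^bsub>M\<^esub> K"
  unfolding set_add_def' by blast

lemma set_add_mono:
  "H \<subseteq> H' \<Longrightarrow> K \<subseteq> K' \<Longrightarrow> H <+>\<^bsub>M\<^esub> K \<subseteq> H' <+>\<^bsub>M\<^esub> K'"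
  unfolding set_add_def' by blast

lemma set_add_zero:
  assumes "abelian_group M" "H \<subseteq> carrier M"
  shows "H <+>\<^bsub>M\<^esub> {\<zero>\<^bsub>M\<^esub>} = H"
proof -
  interpret abelian_group M by fact
  show ?thesis unfolding set_add_def' using assms(2) by auto (metis r_zero subsetD)
qed

lemma cls_some:
  assumes "abelian_group M" "additive_subgroup H M" "a \<in> carrier M"
  shows "\<exists>h\<in>H. (SOME x. x \<in> qcls M H a) = h \<oplus>\<^bsub>M\<^esub> a"
proof -
  interpret abelian_group M by fact
  interpret H: additive_subgroup H M by fact
  have "a \<in> H +>\<^bsub>M\<^esub> a" using a_rcosI[of "\<zero>\<^bsub>M\<^esub>" H a] assms(3) H.a_subset by simp
  then have "(SOME x. x \<in> qcls M H a) \<in> H +>\<^bsub>M\<^esub> a" unfolding qcls_def by (rule someI)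
  then show ?thesis unfolding a_r_coset_def' by blast
qed

lemma cls_absorb:
  assumes "abelian_group M" "additive_subgroup K M" "h \<in> K" "a \<in> carrier M"
  shows "qcls M K (h \<oplus>\<^bsub>M\<^esub> a) = qcls M K a"
proof -
  interpret abelian_group M by fact
  interpret K: additive_subgroup K M by fact
  have "h \<oplus>\<^bsub>M\<^esub> a \<in> K +>\<^bsub>M\<^esub> a" using a_rcosI[of h K a] assms(3,4) K.a_subset by simp
  then show ?thesis unfolding qcls_def using a_repr_independence[OF _ assms(4) K.a_subgroup] by simp
qed

lemma cls_change:
  assumes "abelian_group M" "additive_subgroup H M" "additive_subgroup K M" "H \<subseteq> K" "a \<in> carrier M"
  shows "qcls M K (SOME x. x \<in> qcls M H a) = qcls M K a"
proof -
  obtain h where h: "h \<in> H" "(SOME x. x \<in> qcls M H a) = h \<oplus>\<^bsub>M\<^esub> a"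
    using cls_some[OF assms(1,2,5)] by blast
  have "h \<in> K" using h(1) assms(4) by blast
  then show ?thesis using h(2) cls_absorb[OF assms(1,3) _ assms(5)] by simp
qed


theorem propositionA4:
  fixes R :: "('r, 'x) ring_scheme" and I :: "'r set"
    and C :: "int \<Rightarrow> ('r, 'b, 'c) module_scheme" and d :: "int \<Rightarrow> 'b \<Rightarrow> 'b"
    and k :: int
  assumes "ring R" and "ideal I R"
    and "\<And>n. left_module R (C n)"
    and "\<And>n. n \<notin> {1, 2} \<Longrightarrow> carrier (C n) = {\<zero>\<^bsub>C n\<^esub>}"
    and "\<And>n. left_module_hom R (C n) (C (n + 1)) (d n)"
    and "k \<ge> 1"
  shows
    "let H1 = Hq C d (\<lambda>n. carrier (C n)) (filt R I C k) 1;
         H2 = Hq C d (filt R I C k) (filt R I C (k + 1)) 2;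
         \<psi> = connecting C d (filt R I C k) (filt R I C (k + 1)) 1;
         \<beta> = ssd R I C d k 0 1;
         \<pi> = induced (C 1) (ssEden R I C d k 0 1) id;
         \<rho> = induced (C 2) (ssEden R I C d k k (2 - k)) id
     in ssE R I C d 1 k (2 - k) = H2
        \<and> (\<forall>X\<in>H1. \<rho> (\<psi> X) = \<beta> (\<pi> X))
        \<and> \<pi> ` H1 = ssE R I C d k 0 1
        \<and> \<rho> ` H2 = ssE R I C d k k (2 - k)"
proof -
  note lm = assms(3) and hom = assms(5)
  define F where "F = filt R I C"
  have AG: "\<And>n. abelian_group (C n)" using lm unfolding left_module_def by blast
  have AM: "\<And>n. abelian_monoid (C n)" using AG unfolding abelian_group_def by blast
  have Fsub: "\<And>i n. left_submodule R (C n) (F i n)"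
    unfolding F_def filt_def by (rule itm_sub[OF lm ideal_ipow_carrier[OF assms(1,2)]])
  have Fag: "\<And>i n. additive_subgroup (F i n) (C n)" by (rule lsub_subgroup[OF Fsub])
  have Fcar: "\<And>i n. F i n \<subseteq> carrier (C n)" using Fsub unfolding left_submodule_def by blast
  have Fz: "\<And>i n. \<zero>\<^bsub>C n\<^esub> \<in> F i n" using Fsub unfolding left_submodule_def by blast
  have F0: "\<And>i n. i \<le> 0 \<Longrightarrow> F i n = carrier (C n)"
    unfolding F_def filt_def ideal_ipow_def using itm_carrier[OF lm] by simp
  have Fmono: "\<And>i i' n. i \<le> i' \<Longrightarrow> F i' n \<subseteq> F i n"
    unfolding F_def filt_def
    using itm_mono[OF lm ideal_ipow_mono[OF assms(1,2)] ideal_ipow_carrier[OF assms(1,2)]] by blast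
  have Fd: "\<And>i n. d n ` F i n \<subseteq> F i (n + 1)"
    unfolding F_def filt_def by (rule itm_hom[OF lm lm hom ideal_ipow_carrier[OF assms(1,2)]])
  have triv: "F i n = {\<zero>\<^bsub>C n\<^esub>}" if "n \<notin> {1, 2}" for i n
  proof
    show "F i n \<subseteq> {\<zero>\<^bsub>C n\<^esub>}" using Fcar[where i=i and n=n] assms(4)[OF that] by simp
    show "{\<zero>\<^bsub>C n\<^esub>} \<subseteq> F i n" using Fz[where i=i and n=n] by simp
  qed
  have dz: "\<And>n. d n \<zero>\<^bsub>C n\<^esub> = \<zero>\<^bsub>C (n + 1)\<^esub>" by (rule lmh_zero[OF lm lm hom])
  have dcl: "\<And>n x. x \<in> carrier (C n) \<Longrightarrow> d n x \<in> carrier (C (n + 1))"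
    by (rule lmh_closed[OF hom])
  have dadd: "\<And>n x y. x \<in> carrier (C n) \<Longrightarrow> y \<in> carrier (C n) \<Longrightarrow>
      d n (x \<oplus>\<^bsub>C n\<^esub> y) = d n x \<oplus>\<^bsub>C (n + 1)\<^esub> d n y"
    by (rule lmh_add[OF hom])
  have C3: "\<And>i x. x \<in> carrier (C 2) \<Longrightarrow> d 2 x \<in> F i 3"
  proof -
    fix i x assume "x \<in> carrier (C 2)"
    then have "d 2 x \<in> carrier (C (2 + 1))" by (rule dcl)
    then show "d 2 x \<in> F i 3" using triv[where i=i and n=3] assms(4)[of 3] by simp
  qed
  have Z2: "\<And>kk i j. i + j = 2 \<Longrightarrow> ssZ R I C d kk i j = F i 2"
  proof -
    fix kk i j :: int assume ij: "i + j = 2"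
    then have "i + j + 1 = 3" by simp
    then show "ssZ R I C d kk i j = F i 2"
      unfolding ssZ_def F_def[symmetric] using ij by (auto intro!: C3 dest: subsetD[OF Fcar])
  qed
  have hom1: "left_module_hom R (C 1) (C 2) (d 1)" using hom[of 1] by simp
  define D where "D = d 1 ` F k 1"
  define D' where "D' = d 1 ` F 1 1"
  have Dk: "D \<subseteq> F k 2" using Fd[where i=k and n=1] unfolding D_def by simp
  have DD': "D \<subseteq> D'" unfolding D_def D'_def using Fmono[where i=1 and i'=k and n=1] assms(6) by blast
  have Dsub: "left_submodule R (C 2) D" unfolding D_def
    using lsub_image[OF lm lm hom1 Fsub] by simp
  have D'sub: "left_submodule R (C 2) D'" unfolding D'_def
    using lsub_image[OF lm lm hom1 Fsub] by simp
  define Z01 where "Z01 = {a \<in> F 1 1. d 1 a \<in> F k 2}"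
  have Z01sub: "left_submodule R (C 1) Z01"
  proof -
    have "Z01 = F 1 1 \<inter> {a \<in> carrier (C 1). d 1 a \<in> F k 2}"
      unfolding Z01_def using Fcar by auto
    then show ?thesis using lsub_Int[OF Fsub lsub_preimage[OF lm lm hom1 Fsub]] by simp
  qed
  define E2 where "E2 = F (k + 1) 2 <+>\<^bsub>C 2\<^esub> D"
  define Ekk where "Ekk = F (k + 1) 2 <+>\<^bsub>C 2\<^esub> (F k 2 \<inter> D')"
  have E2ag: "additive_subgroup E2 (C 2)" unfolding E2_def
    by (rule abelian_group.add_additive_subgroups[OF AG Fag lsub_subgroup[OF Dsub]])
  have Ekkag: "additive_subgroup Ekk (C 2)" unfolding Ekk_def
    by (rule abelian_group.add_additive_subgroups[OF AG Fag lsub_subgroup[OF lsub_Int[OF Fsub D'sub]]])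
  have Z01ag: "additive_subgroup Z01 (C 1)" by (rule lsub_subgroup[OF Z01sub])
  have E2Ekk: "E2 \<subseteq> Ekk" unfolding E2_def Ekk_def by (rule set_add_mono) (use Dk DD' in auto)
  have DEkk: "D \<subseteq> Ekk"
  proof
    fix x assume "x \<in> D"
    then have "x \<in> F k 2 \<inter> D'" using Dk DD' by blast
    then have "\<zero>\<^bsub>C 2\<^esub> \<oplus>\<^bsub>C 2\<^esub> x \<in> Ekk" unfolding Ekk_def
      by (rule set_add_mem[OF Fz])
    moreover have "x \<in> carrier (C 2)" using \<open>x \<in> F k 2 \<inter> D'\<close> Fcar[where i=k and n=2] by blast
    ultimately show "x \<in> Ekk" using abelian_monoid.l_zero[OF AM] by metis
  qed
  have Fk1Z01: "F k 1 \<subseteq> Z01" unfolding Z01_def using Fmono[where i=1 and i'=k and n=1] assms(6) Fd[where i=k and n=1] by auto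

  have eE1: "ssEden R I C d 1 k (2 - k) = E2"
  proof -
    have "ssZ R I C d 0 (k + 1) (2 - k - 1) = F (k + 1) 2" by (rule Z2) simp
    moreover have "ssB R I C d 0 k (2 - k) = D"
      unfolding ssB_def F_def[symmetric] using Dk unfolding D_def by auto
    ultimately show ?thesis unfolding ssEden_def E2_def by simp
  qed
  have eEkk: "ssEden R I C d k k (2 - k) = Ekk"
  proof -
    have "ssZ R I C d (k - 1) (k + 1) (2 - k - 1) = F (k + 1) 2" by (rule Z2) simp
    moreover have "ssB R I C d (k - 1) k (2 - k) = F k 2 \<inter> D'"
      unfolding ssB_def F_def[symmetric] D'_def by simp
    ultimately show ?thesis unfolding ssEden_def Ekk_def by simp
  qed
  have eE01: "ssEden R I C d k 0 1 = Z01"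
  proof -
    have "ssZ R I C d (k - 1) (0 + 1) (1 - 1) = Z01"
      unfolding ssZ_def F_def[symmetric] Z01_def by simp
    moreover have "ssB R I C d (k - 1) 0 1 = {\<zero>\<^bsub>C 1\<^esub>}"
    proof -
      have "F (0 - (k - 1)) 0 = {\<zero>\<^bsub>C 0\<^esub>}" by (rule triv) simp
      then show ?thesis unfolding ssB_def F_def[symmetric] using Fz[where i=0 and n=1] dz[of 0] by simp
    qed
    moreover have "Z01 <+>\<^bsub>C 1\<^esub> {\<zero>\<^bsub>C 1\<^esub>} = Z01"
      by (rule set_add_zero[OF AG]) (use Fcar[where i=1 and n=1] in \<open>auto simp: Z01_def\<close>)
    ultimately show ?thesis unfolding ssEden_def by simp
  qed
  have eHbd1: "Hbd C d (\<lambda>n. carrier (C n)) (F k) 1 = F k 1"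
  proof -
    have "carrier (C 0) = {\<zero>\<^bsub>C 0\<^esub>}" using assms(4) by simp
    then have "d (1 - 1) ` carrier (C (1 - 1)) = {\<zero>\<^bsub>C 1\<^esub>}" using dz[of 0] by simp
    then show ?thesis unfolding Hbd_def using set_add_zero[OF AG Fcar] by simp
  qed
  have eHbd2: "Hbd C d (F k) (F (k + 1)) 2 = E2"
    unfolding Hbd_def E2_def D_def by simp
  have eHcyc1: "Hcyc d (\<lambda>n. carrier (C n)) (F k) 1 = {a \<in> carrier (C 1). d 1 a \<in> F k 2}"
    unfolding Hcyc_def by simp
  have eHcyc2: "Hcyc d (F k) (F (k + 1)) 2 = F k 2"
    unfolding Hcyc_def by (auto intro!: C3 dest: subsetD[OF Fcar])
  have eZk01: "ssZ R I C d k 0 1 = {a \<in> carrier (C 1). d 1 a \<in> F k 2}"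
    unfolding ssZ_def F_def[symmetric] using F0[where i=0 and n=1] by simp
  have eZkk: "ssZ R I C d k k (2 - k) = F k 2" by (rule Z2) simp
  have eZ1k: "ssZ R I C d 1 k (2 - k) = F k 2" by (rule Z2) simp

  have H1: "Hq C d (\<lambda>n. carrier (C n)) (F k) 1 = qcls (C 1) (F k 1) ` {a \<in> carrier (C 1). d 1 a \<in> F k 2}"
    unfolding Hq_def quot_def eHbd1 eHcyc1 ..
  have H2: "Hq C d (F k) (F (k + 1)) 2 = qcls (C 2) E2 ` F k 2"
    unfolding Hq_def quot_def eHbd2 eHcyc2 ..
  have S1: "ssE R I C d 1 k (2 - k) = qcls (C 2) E2 ` F k 2"
    unfolding ssE_def quot_def eZ1k eE1 by simp
  have Skk: "ssE R I C d k k (2 - k) = qcls (C 2) Ekk ` F k 2"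
    unfolding ssE_def quot_def eZkk eEkk by simp
  have S01: "ssE R I C d k 0 1 = qcls (C 1) Z01 ` {a \<in> carrier (C 1). d 1 a \<in> F k 2}"
    unfolding ssE_def quot_def eZk01 eE01 by simp
  have pi: "\<And>a. a \<in> carrier (C 1) \<Longrightarrow>
      induced (C 1) (ssEden R I C d k 0 1) id (qcls (C 1) (F k 1) a) = qcls (C 1) Z01 a"
    unfolding induced_def eE01 id_def by (rule cls_change[OF AG Fag Z01ag Fk1Z01])
  have rho: "\<And>a. a \<in> carrier (C 2) \<Longrightarrow>
      induced (C 2) (ssEden R I C d k k (2 - k)) id (qcls (C 2) E2 a) = qcls (C 2) Ekk a"
    unfolding induced_def eEkk id_def by (rule cls_change[OF AG E2ag Ekkag E2Ekk])
  have comm: "induced (C 2) (ssEden R I C d k k (2 - k)) id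
        (connecting C d (F k) (F (k + 1)) 1 (qcls (C 1) (F k 1) a))
      = ssd R I C d k 0 1 (induced (C 1) (ssEden R I C d k 0 1) id (qcls (C 1) (F k 1) a))"
    if a: "a \<in> carrier (C 1)" "d 1 a \<in> F k 2" for a
  proof -
    have da: "d 1 a \<in> carrier (C 2)" using dcl[OF a(1)] by simp
    obtain h where h: "h \<in> F k 1" "(SOME x. x \<in> qcls (C 1) (F k 1) a) = h \<oplus>\<^bsub>C 1\<^esub> a"
      using cls_some[OF AG Fag a(1)] by blast
    have hc: "h \<in> carrier (C 1)" using h(1) Fcar by blast
    have "connecting C d (F k) (F (k + 1)) 1 (qcls (C 1) (F k 1) a)
        = qcls (C 2) E2 (d 1 h \<oplus>\<^bsub>C 2\<^esub> d 1 a)"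
      unfolding connecting_def induced_def h(2) eHbd2[symmetric] using dadd[OF hc a(1)] by simp
    moreover have dhc: "d 1 h \<oplus>\<^bsub>C 2\<^esub> d 1 a \<in> carrier (C 2)"
      using dcl[OF hc] da abelian_monoid.a_closed[OF AM] by simp
    ultimately have L: "induced (C 2) (ssEden R I C d k k (2 - k)) id
        (connecting C d (F k) (F (k + 1)) 1 (qcls (C 1) (F k 1) a))
      = qcls (C 2) Ekk (d 1 a)"
    proof -
      have "d 1 h \<in> Ekk" using DEkk h(1) unfolding D_def by blast
      then have "qcls (C 2) Ekk (d 1 h \<oplus>\<^bsub>C 2\<^esub> d 1 a) = qcls (C 2) Ekk (d 1 a)"
        by (rule cls_absorb[OF AG Ekkag _ da])
      then show ?thesis using rho[OF \<open>d 1 h \<oplus>\<^bsub>C 2\<^esub> d 1 a \<in> carrier (C 2)\<close>] \<open>connecting C d (F k) (F (k + 1)) 1 (qcls (C 1) (F k 1) a)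
        = qcls (C 2) E2 (d 1 h \<oplus>\<^bsub>C 2\<^esub> d 1 a)\<close> by simp
    qed
    obtain e where e: "e \<in> Z01" "(SOME x. x \<in> qcls (C 1) Z01 a) = e \<oplus>\<^bsub>C 1\<^esub> a"
      using cls_some[OF AG Z01ag a(1)] by blast
    have ec: "e \<in> carrier (C 1)" using e(1) Fcar unfolding Z01_def by blast
    have de: "d 1 e \<in> Ekk"
    proof -
      have "d 1 e \<in> F k 2 \<inter> D'" using e(1) unfolding Z01_def D'_def by auto
      then have "\<zero>\<^bsub>C 2\<^esub> \<oplus>\<^bsub>C 2\<^esub> d 1 e \<in> Ekk" unfolding Ekk_def
        by (rule set_add_mem[OF Fz])
      then show ?thesis using dcl[OF ec] abelian_monoid.l_zero[OF AM] by simp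
    qed
    have "ssd R I C d k 0 1 (qcls (C 1) Z01 a) = qcls (C 2) Ekk (d 1 e \<oplus>\<^bsub>C 2\<^esub> d 1 a)"
      unfolding ssd_def induced_def e(2) using dadd[OF ec a(1)] eEkk by simp
    also have "\<dots> = qcls (C 2) Ekk (d 1 a)" by (rule cls_absorb[OF AG Ekkag de da])
    finally show ?thesis using L pi[OF a(1)] by simp
  qed
  show ?thesis
    unfolding Let_def F_def[symmetric]
  proof (intro conjI ballI)
    show "ssE R I C d 1 k (2 - k) = Hq C d (F k) (F (k + 1)) 2" using S1 H2 by simp
    show "induced (C 1) (ssEden R I C d k 0 1) id ` Hq C d (\<lambda>n. carrier (C n)) (F k) 1 = ssE R I C d k 0 1"
      unfolding H1 S01 image_image using pi by (intro image_cong) auto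
    show "induced (C 2) (ssEden R I C d k k (2 - k)) id ` Hq C d (F k) (F (k + 1)) 2 = ssE R I C d k k (2 - k)"
      unfolding H2 Skk image_image using rho Fcar by (intro image_cong) auto
    fix X assume "X \<in> Hq C d (\<lambda>n. carrier (C n)) (F k) 1"
    then obtain a where "a \<in> carrier (C 1)" "d 1 a \<in> F k 2" "X = qcls (C 1) (F k 1) a"
      unfolding H1 by blast
    then show "induced (C 2) (ssEden R I C d k k (2 - k)) id (connecting C d (F k) (F (k + 1)) 1 X) =
         ssd R I C d k 0 1 (induced (C 1) (ssEden R I C d k 0 1) id X)" using comm by simp
  qed
qed

end
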